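(* Let $T=(L,R,\tau,\sigma)$ be a rewrite rule and $m:L\to G$ a matching with respect to $T$. Let $(\mathcal{H},\tau_1,\delta)$ be a pushout of $\tau:|L|\to|R|$ and $|m|:|L|\to|G|$ in the category of sets, with $\tau_1:|G|\to\mathcal{H}$, $\delta:|R|\to\mathcal{H}$, $\delta\circ\tau=\tau_1\circ|m|$. Let $\Gamma=|G|-|m(L)|$, $\Sigma=\mathrm{dom}(\sigma)$, $\Delta=|R|-\Sigma$. Then $\mathcal{H}$ is the disjoint union $\mathcal{H}=\tau_1(\Gamma)+\delta(\Delta)+\delta(\Sigma)$, where the restriction $\tau_1:\Gamma\to\tau_1(\Gamma)$ is bijective, the restriction $\delta:\Delta\to\delta(\Delta)$ is bijective, and for distinct nodes $n,n'\in\Sigma$ with $\delta(n)=\delta(n')$ one has $\sigma(n)=\sigma(n')$. In addition, there is a unique partial function $\sigma_1:\mathcal{H}\rightharpoonup|G|$ with domain $\delta(\Sigma)$ such that $|m|\circ\sigma=\sigma_1\circ\delta$ on $\Sigma$.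
   Context: A signature $\Omega$ assigns an arity to each symbol; for a function $f$, $f^*$ acts letterwise on strings. A termgraph (graph) $G$ has node set $|G|$, a subset of labeled nodes, a labeling $\mathcal{L}_G$ of labeled nodes by symbols of $\Omega$ and a successor function $\mathcal{S}_G$ giving each labeled node a string of nodes of length the arity of its label. A graph morphism $g:G\to H$ is a function $|G|\to|H|$ sending labeled nodes to labeled nodes with $\mathcal{L}_H(g(n))=\mathcal{L}_G(n)$ and $\mathcal{S}_H(g(n))=g^*(\mathcal{S}_G(n))$ for each labeled $n$; $|g|$ denotes its underlying function. For graphs $G,H$ and a function $\tau:|G|\to|H|$, a node $p\in|H|$ is a $\tau$-clone of $q\in|G|$ if $p$ is labeled iff $q$ is labeled, and then $\mathcal{L}_H(p)=\mathcal{L}_G(q)$ and $\mathcal{S}_H(p)=\tau^*(\mathcal{S}_G(q))$. A rewrite rule is a tuple $(L,R,\tau,\sigma)$ with $L,R$ graphs, $\tau:|L|\to|R|$ a function, and $\sigma:|R|\rightharpoonup|L|$ a partial function such that each $n\in\mathrm{dom}(\sigma)$ is unlabeled or is a $\tau$-clone of $\sigma(n)$. A matching with respect to $T=(L,R,\tau,\sigma)$ is a graph morphism $m:L\to G$ such that whenever $m(p)=m(p')$ for distinct nodes $p,p'$ of $L$, then $\tau(p),\tau(p')\in\mathrm{dom}(\sigma)$ and $\sigma(\tau(p))=\sigma(\tau(p'))$. *)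

theory Defs
  imports "HOL-Library.FuncSet"
begin

record ('n, 'f) tgraph =
  nodes :: "'n set"
  labeled :: "'n set"
  lab :: "'n \<Rightarrow> 'f"
  succ :: "'n \<Rightarrow> 'n list"

definition wf_graph :: "('f \<Rightarrow> nat) \<Rightarrow> ('n, 'f) tgraph \<Rightarrow> bool" where
  "wf_graph ar G \<longleftrightarrow> labeled G \<subseteq> nodes G \<and>
     (\<forall>n\<in>labeled G. set (succ G n) \<subseteq> nodes G \<and> length (succ G n) = ar (lab G n))"

definition graph_morphism ::
  "('f \<Rightarrow> nat) \<Rightarrow> ('a, 'f) tgraph \<Rightarrow> ('b, 'f) tgraph \<Rightarrow> ('a \<Rightarrow> 'b) \<Rightarrow> bool" where
  "graph_morphism ar G H g \<longleftrightarrow> wf_graph ar G \<and> wf_graph ar H \<and>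
     g \<in> nodes G \<rightarrow> nodes H \<and>
     (\<forall>n\<in>labeled G. g n \<in> labeled H \<and> lab H (g n) = lab G n \<and>
                     succ H (g n) = map g (succ G n))"

definition is_clone ::
  "('a, 'f) tgraph \<Rightarrow> ('b, 'f) tgraph \<Rightarrow> ('a \<Rightarrow> 'b) \<Rightarrow> 'b \<Rightarrow> 'a \<Rightarrow> bool" where
  "is_clone G H \<tau> p q \<longleftrightarrow> (p \<in> labeled H \<longleftrightarrow> q \<in> labeled G) \<and>
     (q \<in> labeled G \<longrightarrow> lab H p = lab G q \<and> succ H p = map \<tau> (succ G q))"

definition rewrite_rule ::
  "('f \<Rightarrow> nat) \<Rightarrow> ('l, 'f) tgraph \<Rightarrow> ('r, 'f) tgraph \<Rightarrow> ('l \<Rightarrow> 'r) \<Rightarrow> ('r \<Rightarrow> 'l option) \<Rightarrow> bool" where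
  "rewrite_rule ar L R \<tau> \<sigma> \<longleftrightarrow> wf_graph ar L \<and> wf_graph ar R \<and>
     \<tau> \<in> nodes L \<rightarrow> nodes R \<and> dom \<sigma> \<subseteq> nodes R \<and> ran \<sigma> \<subseteq> nodes L \<and>
     (\<forall>n\<in>dom \<sigma>. n \<notin> labeled R \<or> is_clone L R \<tau> n (the (\<sigma> n)))"

definition matching ::
  "('f \<Rightarrow> nat) \<Rightarrow> ('l, 'f) tgraph \<Rightarrow> ('r, 'f) tgraph \<Rightarrow> ('l \<Rightarrow> 'r) \<Rightarrow> ('r \<Rightarrow> 'l option)
    \<Rightarrow> ('g, 'f) tgraph \<Rightarrow> ('l \<Rightarrow> 'g) \<Rightarrow> bool" where
  "matching ar L R \<tau> \<sigma> G m \<longleftrightarrow> rewrite_rule ar L R \<tau> \<sigma> \<and> graph_morphism ar L G m \<and>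
     (\<forall>p\<in>nodes L. \<forall>p'\<in>nodes L. p \<noteq> p' \<and> m p = m p' \<longrightarrow>
        \<tau> p \<in> dom \<sigma> \<and> \<tau> p' \<in> dom \<sigma> \<and> \<sigma> (\<tau> p) = \<sigma> (\<tau> p'))"

text \<open>Pushout in the category of sets of f : A -> B and g : A -> C, with
  i : B -> P, j : C -> P. The universal property is required for all cocones
  into subsets of the type ('b + 'c) set, which contains (a copy of) the
  canonical pushout (quotient of B + C), so this characterises pushouts
  exactly (up to isomorphism).\<close>
definition set_pushout ::
  "'a set \<Rightarrow> 'b set \<Rightarrow> 'c set \<Rightarrow> ('a \<Rightarrow> 'b) \<Rightarrow> ('a \<Rightarrow> 'c) \<Rightarrow>
   'd set \<Rightarrow> ('b \<Rightarrow> 'd) \<Rightarrow> ('c \<Rightarrow> 'd) \<Rightarrow> bool" where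
  "set_pushout A B C f g P i j \<longleftrightarrow>
     f \<in> A \<rightarrow> B \<and> g \<in> A \<rightarrow> C \<and> i \<in> B \<rightarrow> P \<and> j \<in> C \<rightarrow> P \<and>
     (\<forall>a\<in>A. i (f a) = j (g a)) \<and>
     (\<forall>(Z :: ('b + 'c) set) i' j'. i' \<in> B \<rightarrow> Z \<and> j' \<in> C \<rightarrow> Z \<and> (\<forall>a\<in>A. i' (f a) = j' (g a)) \<longrightarrow>
        (\<exists>u. u \<in> P \<rightarrow> Z \<and> (\<forall>b\<in>B. u (i b) = i' b) \<and> (\<forall>c\<in>C. u (j c) = j' c) \<and>
             (\<forall>u'. u' \<in> P \<rightarrow> Z \<and> (\<forall>b\<in>B. u' (i b) = i' b) \<and> (\<forall>c\<in>C. u' (j c) = j' c)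
                   \<longrightarrow> (\<forall>p\<in>P. u' p = u p))))"

end

theory Submission
  imports Defs
begin

lemma po_sep:
  fixes i' :: "'b \<Rightarrow> 'b + 'c" and j' :: "'c \<Rightarrow> 'b + 'c"
  assumes po: "set_pushout A B C f g P i j" and coc: "\<forall>a\<in>A. i' (f a) = j' (g a)"
  shows "\<exists>u. (\<forall>b\<in>B. u (i b) = i' b) \<and> (\<forall>c\<in>C. u (j c) = j' c)"
proof -
  have "\<forall>(Z :: ('b + 'c) set) i' j'. i' \<in> B \<rightarrow> Z \<and> j' \<in> C \<rightarrow> Z \<and> (\<forall>a\<in>A. i' (f a) = j' (g a)) \<longrightarrow>
        (\<exists>u. u \<in> P \<rightarrow> Z \<and> (\<forall>b\<in>B. u (i b) = i' b) \<and> (\<forall>c\<in>C. u (j c) = j' c) \<and>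
             (\<forall>u'. u' \<in> P \<rightarrow> Z \<and> (\<forall>b\<in>B. u' (i b) = i' b) \<and> (\<forall>c\<in>C. u' (j c) = j' c)
                   \<longrightarrow> (\<forall>p\<in>P. u' p = u p)))" using po unfolding set_pushout_def by blast
  from this[rule_format, of i' UNIV j'] coc show ?thesis by auto
qed

lemma po_cover:
  fixes B :: "'b set" and C :: "'c set"
  assumes po: "set_pushout A B C f g P i j" and x: "x \<in> P"
  shows "x \<in> i ` B \<union> j ` C"
proof (rule ccontr)
  assume nx: "x \<notin> i ` B \<union> j ` C"
  define i' :: "'b \<Rightarrow> 'b + 'c" where "i' = (\<lambda>_. Inl undefined)"
  define j' :: "'c \<Rightarrow> 'b + 'c" where "j' = (\<lambda>_. Inl undefined)"
  have U: "\<forall>(Z :: ('b + 'c) set) i' j'. i' \<in> B \<rightarrow> Z \<and> j' \<in> C \<rightarrow> Z \<and> (\<forall>a\<in>A. i' (f a) = j' (g a)) \<longrightarrow>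
        (\<exists>u. u \<in> P \<rightarrow> Z \<and> (\<forall>b\<in>B. u (i b) = i' b) \<and> (\<forall>c\<in>C. u (j c) = j' c) \<and>
             (\<forall>u'. u' \<in> P \<rightarrow> Z \<and> (\<forall>b\<in>B. u' (i b) = i' b) \<and> (\<forall>c\<in>C. u' (j c) = j' c)
                   \<longrightarrow> (\<forall>p\<in>P. u' p = u p)))" using po unfolding set_pushout_def by blast
  from U[rule_format, of i' UNIV j'] obtain u where
    u: "(\<forall>b\<in>B. u (i b) = i' b) \<and> (\<forall>c\<in>C. u (j c) = j' c) \<and>
             (\<forall>u'. u' \<in> P \<rightarrow> UNIV \<and> (\<forall>b\<in>B. u' (i b) = i' b) \<and> (\<forall>c\<in>C. u' (j c) = j' c)
                   \<longrightarrow> (\<forall>p\<in>P. u' p = u p))" by (auto simp: i'_def j'_def)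
  define v :: "'b + 'c" where "v = (if u x = Inl undefined then Inr undefined else Inl undefined)"
  have "v \<noteq> u x" unfolding v_def by auto
  moreover have "(u(x := v)) x = u x"
  proof -
    have h1: "\<forall>b\<in>B. (u(x := v)) (i b) = i' b"
    proof
      fix b assume "b \<in> B"
      hence "i b \<noteq> x" using nx by blast
      thus "(u(x := v)) (i b) = i' b" using u \<open>b \<in> B\<close> by simp
    qed
    have h2: "\<forall>c\<in>C. (u(x := v)) (j c) = j' c"
    proof
      fix c assume "c \<in> C"
      hence "j c \<noteq> x" using nx by blast
      thus "(u(x := v)) (j c) = j' c" using u \<open>c \<in> C\<close> by simp
    qed
    have "u(x := v) \<in> P \<rightarrow> UNIV" by simp
    with h1 h2 u x show ?thesis by blast
  qed
  ultimately show False by simp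
qed

theorem proposition1:
  fixes ar :: "'f \<Rightarrow> nat"
    and L :: "('l, 'f) tgraph" and R :: "('r, 'f) tgraph" and G :: "('g, 'f) tgraph"
    and \<tau> :: "'l \<Rightarrow> 'r" and \<sigma> :: "'r \<Rightarrow> 'l option" and m :: "'l \<Rightarrow> 'g"
    and H :: "'h set" and \<tau>\<^sub>1 :: "'g \<Rightarrow> 'h" and \<delta> :: "'r \<Rightarrow> 'h"
  assumes match: "matching ar L R \<tau> \<sigma> G m"
    and po: "set_pushout (nodes L) (nodes R) (nodes G) \<tau> m H \<delta> \<tau>\<^sub>1"
  defines "\<Gamma> \<equiv> nodes G - m ` nodes L"
    and "\<Sigma> \<equiv> dom \<sigma>"
    and "\<Delta> \<equiv> nodes R - dom \<sigma>"
  shows "H = \<tau>\<^sub>1 ` \<Gamma> \<union> \<delta> ` \<Delta> \<union> \<delta> ` \<Sigma> \<and>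
         \<tau>\<^sub>1 ` \<Gamma> \<inter> \<delta> ` \<Delta> = {} \<and> \<tau>\<^sub>1 ` \<Gamma> \<inter> \<delta> ` \<Sigma> = {} \<and> \<delta> ` \<Delta> \<inter> \<delta> ` \<Sigma> = {} \<and>
         bij_betw \<tau>\<^sub>1 \<Gamma> (\<tau>\<^sub>1 ` \<Gamma>) \<and>
         bij_betw \<delta> \<Delta> (\<delta> ` \<Delta>) \<and>
         (\<forall>n\<in>\<Sigma>. \<forall>n'\<in>\<Sigma>. n \<noteq> n' \<and> \<delta> n = \<delta> n' \<longrightarrow> \<sigma> n = \<sigma> n') \<and>
         (\<exists>!\<sigma>\<^sub>1 :: 'h \<Rightarrow> 'g option. dom \<sigma>\<^sub>1 = \<delta> ` \<Sigma> \<and>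
              (\<forall>n\<in>\<Sigma>. \<sigma>\<^sub>1 (\<delta> n) = map_option m (\<sigma> n)))"
proof -
  have M: "rewrite_rule ar L R \<tau> \<sigma> \<and> graph_morphism ar L G m \<and>
     (\<forall>p\<in>nodes L. \<forall>p'\<in>nodes L. p \<noteq> p' \<and> m p = m p' \<longrightarrow>
        \<tau> p \<in> dom \<sigma> \<and> \<tau> p' \<in> dom \<sigma> \<and> \<sigma> (\<tau> p) = \<sigma> (\<tau> p'))"
    using match unfolding matching_def .
  have rr: "rewrite_rule ar L R \<tau> \<sigma>" using M by (rule conjunct1)
  have mt: "\<And>p p'. p \<in> nodes L \<Longrightarrow> p' \<in> nodes L \<Longrightarrow> p \<noteq> p' \<Longrightarrow> m p = m p' \<Longrightarrow>
        \<tau> p \<in> dom \<sigma> \<and> \<tau> p' \<in> dom \<sigma> \<and> \<sigma> (\<tau> p) = \<sigma> (\<tau> p')"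
    using M[THEN conjunct2, THEN conjunct2] by blast
  have RR: "wf_graph ar L \<and> wf_graph ar R \<and>
     \<tau> \<in> nodes L \<rightarrow> nodes R \<and> dom \<sigma> \<subseteq> nodes R \<and> ran \<sigma> \<subseteq> nodes L \<and>
     (\<forall>n\<in>dom \<sigma>. n \<notin> labeled R \<or> is_clone L R \<tau> n (the (\<sigma> n)))"
    using rr unfolding rewrite_rule_def .
  have SR: "\<Sigma> \<subseteq> nodes R" using RR unfolding \<Sigma>_def by (elim conjE)
  have tauR: "\<tau> \<in> nodes L \<rightarrow> nodes R" using RR by (elim conjE)
  have P: "\<tau> \<in> nodes L \<rightarrow> nodes R \<and> m \<in> nodes L \<rightarrow> nodes G \<and> \<delta> \<in> nodes R \<rightarrow> H \<and> \<tau>\<^sub>1 \<in> nodes G \<rightarrow> H \<and>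
     (\<forall>a\<in>nodes L. \<delta> (\<tau> a) = \<tau>\<^sub>1 (m a))"
    using po unfolding set_pushout_def by (elim conjE) (intro conjI)
  have pofacts: "\<delta> \<in> nodes R \<rightarrow> H" "\<tau>\<^sub>1 \<in> nodes G \<rightarrow> H"
     "\<forall>a\<in>nodes L. \<delta> (\<tau> a) = \<tau>\<^sub>1 (m a)"
    using P by blast+
  have GA: "\<And>g0 r. g0 \<in> \<Gamma> \<Longrightarrow> r \<in> nodes R \<Longrightarrow> \<delta> r \<noteq> \<tau>\<^sub>1 g0"
   and GB: "\<And>g0 g. g0 \<in> \<Gamma> \<Longrightarrow> g \<in> nodes G \<Longrightarrow> g \<noteq> g0 \<Longrightarrow> \<tau>\<^sub>1 g \<noteq> \<tau>\<^sub>1 g0"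
  proof -
    fix g0 assume g0: "g0 \<in> \<Gamma>"
    define i' :: "'r \<Rightarrow> 'r + 'g" where "i' = (\<lambda>_. Inl undefined)"
    define j' :: "'g \<Rightarrow> 'r + 'g" where "j' = (\<lambda>g. if g = g0 then Inr g0 else Inl undefined)"
    have "\<forall>a\<in>nodes L. i' (\<tau> a) = j' (m a)" using g0 unfolding i'_def j'_def \<Gamma>_def by auto
    from po_sep[OF po this] obtain u where u: "\<forall>b\<in>nodes R. u (\<delta> b) = i' b"
      "\<forall>c\<in>nodes G. u (\<tau>\<^sub>1 c) = j' c" by blast
    have g0G: "g0 \<in> nodes G" using g0 unfolding \<Gamma>_def by blast
    have ug0: "u (\<tau>\<^sub>1 g0) = Inr g0" using u(2) g0G unfolding j'_def by simp
    show "\<delta> r \<noteq> \<tau>\<^sub>1 g0" if "r \<in> nodes R" for r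
    proof
      assume "\<delta> r = \<tau>\<^sub>1 g0"
      moreover have "u (\<delta> r) = Inl undefined" using u(1) that unfolding i'_def by simp
      ultimately show False using ug0 by simp
    qed
    show "\<tau>\<^sub>1 g \<noteq> \<tau>\<^sub>1 g0" if "g \<in> nodes G" "g \<noteq> g0" for g
    proof
      assume "\<tau>\<^sub>1 g = \<tau>\<^sub>1 g0"
      moreover have "u (\<tau>\<^sub>1 g) = Inl undefined" using u(2) that unfolding j'_def by simp
      ultimately show False using ug0 by simp
    qed
  qed
  have DA: "\<And>r0 r. r0 \<in> \<Delta> \<Longrightarrow> r \<in> nodes R \<Longrightarrow> r \<noteq> r0 \<Longrightarrow> \<delta> r \<noteq> \<delta> r0"
  proof -
    fix r0 r assume r0: "r0 \<in> \<Delta>" and r: "r \<in> nodes R" "r \<noteq> r0"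
    define i' :: "'r \<Rightarrow> 'r + 'g" where "i' = (\<lambda>x. if x = r0 then Inl undefined else Inr undefined)"
    define j' :: "'g \<Rightarrow> 'r + 'g" where
      "j' = (\<lambda>g. if \<exists>a\<in>nodes L. \<tau> a = r0 \<and> m a = g then Inl undefined else Inr undefined)"
    have "\<forall>a\<in>nodes L. i' (\<tau> a) = j' (m a)"
    proof
      fix a assume a: "a \<in> nodes L"
      have "(\<exists>a'\<in>nodes L. \<tau> a' = r0 \<and> m a' = m a) \<longleftrightarrow> \<tau> a = r0"
      proof
        assume "\<exists>a'\<in>nodes L. \<tau> a' = r0 \<and> m a' = m a"
        then obtain a' where a': "a' \<in> nodes L" "\<tau> a' = r0" "m a' = m a" by blast
        have "a' = a"
        proof (rule ccontr)
          assume "a' \<noteq> a"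
          from mt[OF a'(1) a this a'(3)] a'(2) r0 show False unfolding \<Delta>_def by blast
        qed
        thus "\<tau> a = r0" using a' by simp
      next
        assume "\<tau> a = r0" thus "\<exists>a'\<in>nodes L. \<tau> a' = r0 \<and> m a' = m a" using a by blast
      qed
      thus "i' (\<tau> a) = j' (m a)" unfolding i'_def j'_def by auto
    qed
    from po_sep[OF po this] obtain u where u: "\<forall>b\<in>nodes R. u (\<delta> b) = i' b" by blast
    have "r0 \<in> nodes R" using r0 unfolding \<Delta>_def by blast
    hence "u (\<delta> r0) = Inl undefined" using u unfolding i'_def by simp
    moreover have "u (\<delta> r) = Inr undefined" using u r unfolding i'_def by simp
    ultimately show "\<delta> r \<noteq> \<delta> r0" by auto
  qed
  have SA: "\<And>n n'. n \<in> \<Sigma> \<Longrightarrow> n' \<in> \<Sigma> \<Longrightarrow> \<delta> n = \<delta> n' \<Longrightarrow> \<sigma> n = \<sigma> n'"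
  proof -
    fix n n' assume n: "n \<in> \<Sigma>" "n' \<in> \<Sigma>" "\<delta> n = \<delta> n'"
    define i' :: "'r \<Rightarrow> 'r + 'g" where
      "i' = (\<lambda>x. if x \<in> dom \<sigma> \<and> \<sigma> x = \<sigma> n then Inl undefined else Inr undefined)"
    define j' :: "'g \<Rightarrow> 'r + 'g" where
      "j' = (\<lambda>g. if \<exists>a\<in>nodes L. m a = g \<and> \<tau> a \<in> dom \<sigma> \<and> \<sigma> (\<tau> a) = \<sigma> n
                  then Inl undefined else Inr undefined)"
    have "\<forall>a\<in>nodes L. i' (\<tau> a) = j' (m a)"
    proof
      fix a assume a: "a \<in> nodes L"
      have "(\<exists>a'\<in>nodes L. m a' = m a \<and> \<tau> a' \<in> dom \<sigma> \<and> \<sigma> (\<tau> a') = \<sigma> n)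
              \<longleftrightarrow> \<tau> a \<in> dom \<sigma> \<and> \<sigma> (\<tau> a) = \<sigma> n"
      proof
        assume "\<exists>a'\<in>nodes L. m a' = m a \<and> \<tau> a' \<in> dom \<sigma> \<and> \<sigma> (\<tau> a') = \<sigma> n"
        then obtain a' where a': "a' \<in> nodes L" "m a' = m a" "\<tau> a' \<in> dom \<sigma>" "\<sigma> (\<tau> a') = \<sigma> n" by blast
        show "\<tau> a \<in> dom \<sigma> \<and> \<sigma> (\<tau> a) = \<sigma> n"
        proof (cases "a' = a")
          case True thus ?thesis using a' by simp
        next
          case False from mt[OF a'(1) a False a'(2)] a' show ?thesis by simp
        qed
      next
        assume "\<tau> a \<in> dom \<sigma> \<and> \<sigma> (\<tau> a) = \<sigma> n"
        thus "\<exists>a'\<in>nodes L. m a' = m a \<and> \<tau> a' \<in> dom \<sigma> \<and> \<sigma> (\<tau> a') = \<sigma> n" using a by blast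
      qed
      thus "i' (\<tau> a) = j' (m a)" unfolding i'_def j'_def by auto
    qed
    from po_sep[OF po this] obtain u where u: "\<forall>b\<in>nodes R. u (\<delta> b) = i' b" by blast
    have "n \<in> nodes R" "n' \<in> nodes R" using n SR by auto
    hence "i' n = i' n'" using u n(3) by metis
    thus "\<sigma> n = \<sigma> n'" using n unfolding i'_def \<Sigma>_def by (auto split: if_splits)
  qed
  have GD: "\<Gamma> \<subseteq> nodes G" and DR: "\<Delta> \<subseteq> nodes R" unfolding \<Gamma>_def \<Delta>_def by auto
  have cover: "H = \<tau>\<^sub>1 ` \<Gamma> \<union> \<delta> ` \<Delta> \<union> \<delta> ` \<Sigma>"
  proof
    show "\<tau>\<^sub>1 ` \<Gamma> \<union> \<delta> ` \<Delta> \<union> \<delta> ` \<Sigma> \<subseteq> H" using pofacts GD DR SR by blast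
    show "H \<subseteq> \<tau>\<^sub>1 ` \<Gamma> \<union> \<delta> ` \<Delta> \<union> \<delta> ` \<Sigma>"
    proof
      fix x assume x: "x \<in> H"
      from po_cover[OF po x] show "x \<in> \<tau>\<^sub>1 ` \<Gamma> \<union> \<delta> ` \<Delta> \<union> \<delta> ` \<Sigma>"
      proof
        assume "x \<in> \<delta> ` nodes R" thus ?thesis unfolding \<Delta>_def \<Sigma>_def by blast
      next
        assume "x \<in> \<tau>\<^sub>1 ` nodes G"
        then obtain g where g: "g \<in> nodes G" "x = \<tau>\<^sub>1 g" by blast
        show ?thesis
        proof (cases "g \<in> m ` nodes L")
          case True
          then obtain a where a: "a \<in> nodes L" "g = m a" by blast
          have "x = \<delta> (\<tau> a)" using pofacts a g by simp
          moreover have "\<tau> a \<in> nodes R" using tauR a by blast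
          ultimately show ?thesis unfolding \<Delta>_def \<Sigma>_def by blast
        next
          case False thus ?thesis using g unfolding \<Gamma>_def by blast
        qed
      qed
    qed
  qed
  have d1: "\<tau>\<^sub>1 ` \<Gamma> \<inter> \<delta> ` \<Delta> = {}"
  proof (rule equals0I)
    fix x assume "x \<in> \<tau>\<^sub>1 ` \<Gamma> \<inter> \<delta> ` \<Delta>"
    then have x1: "x \<in> \<tau>\<^sub>1 ` \<Gamma>" and x2: "x \<in> \<delta> ` \<Delta>" by auto
    from x1 obtain g where g: "g \<in> \<Gamma>" and eg: "x = \<tau>\<^sub>1 g" by (rule imageE)
    from x2 obtain r where r: "r \<in> \<Delta>" and er: "x = \<delta> r" by (rule imageE)
    have e: "\<delta> r = \<tau>\<^sub>1 g" using eg er by simp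
    have "r \<in> nodes R" using DR r by (rule subsetD)
    from GA[OF g this] e show False by (rule notE)
  qed
  have d2: "\<tau>\<^sub>1 ` \<Gamma> \<inter> \<delta> ` \<Sigma> = {}"
  proof (rule equals0I)
    fix x assume "x \<in> \<tau>\<^sub>1 ` \<Gamma> \<inter> \<delta> ` \<Sigma>"
    then have x1: "x \<in> \<tau>\<^sub>1 ` \<Gamma>" and x2: "x \<in> \<delta> ` \<Sigma>" by auto
    from x1 obtain g where g: "g \<in> \<Gamma>" and eg: "x = \<tau>\<^sub>1 g" by (rule imageE)
    from x2 obtain r where r: "r \<in> \<Sigma>" and er: "x = \<delta> r" by (rule imageE)
    have e: "\<delta> r = \<tau>\<^sub>1 g" using eg er by simp
    have "r \<in> nodes R" using SR r by (rule subsetD)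
    from GA[OF g this] e show False by (rule notE)
  qed
  have d3: "\<delta> ` \<Delta> \<inter> \<delta> ` \<Sigma> = {}"
  proof (rule equals0I)
    fix x assume "x \<in> \<delta> ` \<Delta> \<inter> \<delta> ` \<Sigma>"
    then have x1: "x \<in> \<delta> ` \<Delta>" and x2: "x \<in> \<delta> ` \<Sigma>" by auto
    from x1 obtain r where r: "r \<in> \<Delta>" and eg: "x = \<delta> r" by (rule imageE)
    from x2 obtain s where s: "s \<in> \<Sigma>" and er: "x = \<delta> s" by (rule imageE)
    have e: "\<delta> s = \<delta> r" using eg er by simp
    have ne: "s \<noteq> r" using r s unfolding \<Delta>_def \<Sigma>_def by blast
    have "s \<in> nodes R" using SR s by (rule subsetD)
    from DA[OF r this ne] e show False by (rule notE)
  qed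
  have b1: "bij_betw \<tau>\<^sub>1 \<Gamma> (\<tau>\<^sub>1 ` \<Gamma>)"
    unfolding bij_betw_def
  proof
    show "inj_on \<tau>\<^sub>1 \<Gamma>"
    proof (rule inj_onI, rule ccontr)
      fix x y assume x: "x \<in> \<Gamma>" and y: "y \<in> \<Gamma>" and e: "\<tau>\<^sub>1 x = \<tau>\<^sub>1 y" and ne: "x \<noteq> y"
      have "x \<in> nodes G" using GD x by (rule subsetD)
      from GB[OF y this ne] e show False by (rule notE)
    qed
  qed simp
  have b2: "bij_betw \<delta> \<Delta> (\<delta> ` \<Delta>)"
    unfolding bij_betw_def
  proof
    show "inj_on \<delta> \<Delta>"
    proof (rule inj_onI, rule ccontr)
      fix x y assume x: "x \<in> \<Delta>" and y: "y \<in> \<Delta>" and e: "\<delta> x = \<delta> y" and ne: "x \<noteq> y"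
      have "x \<in> nodes R" using DR x by (rule subsetD)
      from DA[OF y this ne] e show False by (rule notE)
    qed
  qed simp
  define \<sigma>1 :: "'h \<Rightarrow> 'g option" where
    "\<sigma>1 = (\<lambda>h. if h \<in> \<delta> ` \<Sigma> then map_option m (\<sigma> (SOME n. n \<in> \<Sigma> \<and> \<delta> n = h)) else None)"
  have s1: "dom \<sigma>1 = \<delta> ` \<Sigma>"
  proof -
    { fix h assume "h \<in> \<delta> ` \<Sigma>"
      then obtain n where n: "n \<in> \<Sigma>" "\<delta> n = h" by blast
      hence "(SOME n. n \<in> \<Sigma> \<and> \<delta> n = h) \<in> \<Sigma>" by (metis (mono_tags, lifting) someI)
      hence "\<sigma> (SOME n. n \<in> \<Sigma> \<and> \<delta> n = h) \<noteq> None" by (simp add: \<Sigma>_def domIff)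
      hence "\<sigma>1 h \<noteq> None" unfolding \<sigma>1_def using \<open>h \<in> \<delta> ` \<Sigma>\<close> by simp }
    moreover
    { fix h assume "\<sigma>1 h \<noteq> None"
      hence "h \<in> \<delta> ` \<Sigma>" unfolding \<sigma>1_def by (cases "h \<in> \<delta> ` \<Sigma>") simp_all }
    ultimately show ?thesis by blast
  qed
  have s2: "\<forall>n\<in>\<Sigma>. \<sigma>1 (\<delta> n) = map_option m (\<sigma> n)"
  proof
    fix n assume n: "n \<in> \<Sigma>"
    have "(SOME k. k \<in> \<Sigma> \<and> \<delta> k = \<delta> n) \<in> \<Sigma> \<and> \<delta> (SOME k. k \<in> \<Sigma> \<and> \<delta> k = \<delta> n) = \<delta> n"
      using n by (metis (mono_tags, lifting) someI)
    hence "\<sigma> (SOME k. k \<in> \<Sigma> \<and> \<delta> k = \<delta> n) = \<sigma> n" using SA n by blast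
    thus "\<sigma>1 (\<delta> n) = map_option m (\<sigma> n)" unfolding \<sigma>1_def using n by auto
  qed
  have uniq: "\<exists>!\<sigma>\<^sub>1 :: 'h \<Rightarrow> 'g option. dom \<sigma>\<^sub>1 = \<delta> ` \<Sigma> \<and>
              (\<forall>n\<in>\<Sigma>. \<sigma>\<^sub>1 (\<delta> n) = map_option m (\<sigma> n))"
  proof (rule ex1I[of _ \<sigma>1])
    show "dom \<sigma>1 = \<delta> ` \<Sigma> \<and> (\<forall>n\<in>\<Sigma>. \<sigma>1 (\<delta> n) = map_option m (\<sigma> n))" using s1 s2 by blast
  next
    fix s assume s: "dom s = \<delta> ` \<Sigma> \<and> (\<forall>n\<in>\<Sigma>. s (\<delta> n) = map_option m (\<sigma> n))"
    show "s = \<sigma>1"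
    proof
      fix h show "s h = \<sigma>1 h"
      proof (cases "h \<in> \<delta> ` \<Sigma>")
        case True then obtain n where "n \<in> \<Sigma>" "h = \<delta> n" by blast
        thus ?thesis using s s2 by simp
      next
        case False
        have "h \<notin> dom s" using s False by simp
        moreover have "\<sigma>1 h = None" unfolding \<sigma>1_def using False by simp
        ultimately show ?thesis by (simp add: domIff)
      qed
    qed
  qed
  have SA': "\<forall>n\<in>\<Sigma>. \<forall>n'\<in>\<Sigma>. n \<noteq> n' \<and> \<delta> n = \<delta> n' \<longrightarrow> \<sigma> n = \<sigma> n'" using SA by blast
  show ?thesis using cover d1 d2 d3 b1 b2 SA' uniq by (intro conjI)
qed

end
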